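(* Let $S \in \mathbb{R}^{n\times n}$ be a diagonal matrix whose diagonal entries are strictly positive and bounded. Then for every $G \in \mathbb{R}^{m \times n}$ with $G \neq 0$, $$\langle G, \operatorname{PolarFactor}(G S) \rangle > 0.$$
   Context: $\langle A, B\rangle = \operatorname{tr}(A^\top B)$ denotes the Frobenius inner product. For a matrix $X$, $\operatorname{PolarFactor}(X) = X (X^\top X)^{-1/2}$, where $(X^\top X)^{-1/2}$ is the positive semidefinite inverse square root taken on the support of $X^\top X$ (Moore–Penrose inverse square root when $X$ is rank deficient); equivalently, if $X = U\Sigma V^\top$ is a compact singular value decomposition, $\operatorname{PolarFactor}(X) = UV^\top$. No squareness or full-rank assumption is made on $G$. *)

theory Defs
  imports "HOL-Analysis.Analysis"
begin

definition frob_inner :: "real^'n^'m \<Rightarrow> real^'n^'m \<Rightarrow> real" where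
  "frob_inner A B = trace (transpose A ** B)"

definition psd :: "real^'n^'n \<Rightarrow> bool" where
  "psd M \<longleftrightarrow> transpose M = M \<and> (\<forall>x. 0 \<le> x \<bullet> (M *v x))"

definition is_pinv :: "real^'n^'m \<Rightarrow> real^'m^'n \<Rightarrow> bool" where
  "is_pinv A B \<longleftrightarrow> A ** B ** A = A \<and> B ** A ** B = B \<and>
     transpose (A ** B) = A ** B \<and> transpose (B ** A) = B ** A"

definition pinv :: "real^'n^'m \<Rightarrow> real^'m^'n" where
  "pinv A = (THE B. is_pinv A B)"

definition psd_sqrt :: "real^'n^'n \<Rightarrow> real^'n^'n" where
  "psd_sqrt M = (THE R. psd R \<and> R ** R = M)"

definition PolarFactor :: "real^'n^'m \<Rightarrow> real^'n^'m" where
  "PolarFactor X = X ** psd_sqrt (pinv (transpose X ** X))"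

end

theory Submission
  imports Defs
begin

lemma sym_inner:
  fixes A :: "real^'n^'n"
  assumes "transpose A = A"
  shows "x \<bullet> (A *v y) = (A *v x) \<bullet> y"
  by (metis assms dot_lmul_matrix inner_commute transpose_transpose vector_transpose_matrix)

lemma max_eig:
  fixes A :: "real^'n^'n"
  assumes sym: "transpose A = A" and sub: "subspace V"
    and inv: "\<And>x. x \<in> V \<Longrightarrow> A *v x \<in> V" and ne: "x0 \<in> V" "x0 \<noteq> 0"
  shows "\<exists>v\<in>V. norm v = 1 \<and> (\<exists>l. A *v v = l *\<^sub>R v)"
proof -
  define f where "f x = x \<bullet> (A *v x)" for x
  define K where "K = V \<inter> sphere 0 1"
  have cK: "compact K" unfolding K_def
    by (simp add: closed_subspace closed_Int_compact sub)
  have "x0 /\<^sub>R norm x0 \<in> K" using ne sub unfolding K_def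
    by (simp add: subspace_scale)
  hence neK: "K \<noteq> {}" by auto
  have cf: "continuous_on K f" unfolding f_def
    by (intro continuous_intros linear_continuous_on matrix_vector_mul_linear bounded_linear_intros) 
  obtain v where vK: "v \<in> K" and vmax: "\<And>y. y \<in> K \<Longrightarrow> f y \<le> f v"
    using continuous_attains_sup[OF cK neK cf] by blast
  have vV: "v \<in> V" and nv: "norm v = 1" using vK by (auto simp: K_def)
  have vv: "v \<bullet> v = 1" using nv by (simp add: dot_square_norm)
  have hom: "f y \<le> f v * (y \<bullet> y)" if "y \<in> V" for y
  proof (cases "y = 0")
    case True then show ?thesis by (simp add: f_def)
  next
    case False
    have "y /\<^sub>R norm y \<in> K" using that sub False unfolding K_def
      by (simp add: subspace_scale)
    hence "f (y /\<^sub>R norm y) \<le> f v" by (rule vmax)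
    moreover have "f (y /\<^sub>R norm y) = f y / (norm y)^2"
      by (simp add: f_def matrix_vector_mult_scaleR power2_eq_square field_simps)
    moreover have "y \<bullet> y = (norm y)^2" by (simp add: dot_square_norm)
    moreover have "norm y > 0" using False by simp
    ultimately show ?thesis by (simp add: divide_le_eq mult.commute)
  qed
  have orth: "w \<bullet> (A *v v) = 0" if wV: "w \<in> V" and wv: "w \<bullet> v = 0" for w
  proof -
    define c where "c = w \<bullet> (A *v v)"
    define K2 where "K2 = f v * (w \<bullet> w) - f w"
    have ineq: "2 * t * c \<le> t^2 * K2" for t
    proof -
      have "v + t *\<^sub>R w \<in> V" using vV wV sub by (simp add: subspace_add subspace_scale)
      hence a: "f (v + t *\<^sub>R w) \<le> f v * ((v + t *\<^sub>R w) \<bullet> (v + t *\<^sub>R w))" by (rule hom)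
      have b: "f (v + t *\<^sub>R w) = f v + 2 * t * c + t^2 * f w"
        using sym_inner[OF sym, of v w]
        by (simp add: f_def c_def algebra_simps inner_add_left inner_add_right power2_eq_square inner_commute)
      have c: "(v + t *\<^sub>R w) \<bullet> (v + t *\<^sub>R w) = 1 + t^2 * (w \<bullet> w)"
        using vv wv by (simp add: algebra_simps inner_add_left inner_add_right power2_eq_square inner_commute)
      have "f v + 2 * t * c + t^2 * f w \<le> f v * (1 + t^2 * (w \<bullet> w))"
        using a unfolding b c .
      thus ?thesis by (simp add: K2_def algebra_simps)
    qed
    show ?thesis
    proof (rule ccontr)
      assume "w \<bullet> (A *v v) \<noteq> 0"
      hence c0: "c \<noteq> 0" by (simp add: c_def)
      define D where "D = \<bar>K2\<bar> + 1"
      define t where "t = c / D"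
      have D0: "D > 0" by (simp add: D_def add_nonneg_pos)
      have "2 * t * c \<le> t^2 * K2" by (rule ineq)
      hence "(2 * t * c) * D^2 \<le> (t^2 * K2) * D^2" by (simp add: mult_right_mono)
      moreover have "(2 * t * c) * D^2 = 2 * c * c * D" using D0
        by (simp add: t_def power2_eq_square field_simps)
      moreover have "(t^2 * K2) * D^2 = c * c * K2" using D0
        by (simp add: t_def power2_eq_square field_simps)
      ultimately have "2 * c * c * D \<le> c * c * K2" by linarith
      hence "2 * c * c * (\<bar>K2\<bar> + 1) \<le> c * c * K2" by (simp only: D_def)
      moreover have "c * c > 0" using c0 by (auto simp add: zero_less_mult_iff linorder_neq_iff)
      ultimately have "(c * c) * (2 * (\<bar>K2\<bar> + 1)) \<le> (c * c) * K2" "c * c > 0"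
        by (simp_all add: ac_simps)
      hence "2 * (\<bar>K2\<bar> + 1) \<le> K2" using mult_le_cancel_left_pos by blast
      thus False by (cases "K2 \<ge> 0") auto
    qed
  qed
  define u where "u = A *v v - (v \<bullet> (A *v v)) *\<^sub>R v"
  have uV: "u \<in> V" unfolding u_def using inv[OF vV] vV sub
    by (simp add: subspace_diff subspace_scale)
  have uv: "u \<bullet> v = 0" using vv by (simp add: u_def inner_diff_left inner_commute[of "A *v v" v])
  have "u \<bullet> u = u \<bullet> (A *v v) - (v \<bullet> (A *v v)) * (u \<bullet> v)"
    by (simp add: u_def inner_diff_right)
  also have "\<dots> = 0" using orth[OF uV uv] uv by simp
  finally have "u = 0" by simp
  hence "A *v v = (v \<bullet> (A *v v)) *\<^sub>R v" by (simp add: u_def)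
  thus ?thesis using vV nv by blast
qed

lemma eig_set:
  fixes A :: "real^'n^'n"
  assumes sym: "transpose A = A"
  shows "k \<le> CARD('n) \<Longrightarrow> \<exists>B. finite B \<and> card B = k \<and> (\<forall>b\<in>B. norm b = 1 \<and> (\<exists>l. A *v b = l *\<^sub>R b))
      \<and> (\<forall>a\<in>B. \<forall>b\<in>B. a \<noteq> b \<longrightarrow> a \<bullet> b = 0)"
proof (induction k)
  case 0
  show ?case by (intro exI[of _ "{}"]) auto
next
  case (Suc k)
  then obtain B where fB: "finite B" and cB: "card B = k"
    and eB: "\<forall>b\<in>B. norm b = 1 \<and> (\<exists>l. A *v b = l *\<^sub>R b)"
    and oB: "\<forall>a\<in>B. \<forall>b\<in>B. a \<noteq> b \<longrightarrow> a \<bullet> b = 0" by auto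
  define V where "V = {x. \<forall>b\<in>B. b \<bullet> x = 0}"
  have subV: "subspace V" unfolding subspace_def V_def
    by (auto simp: inner_add_right)
  have invV: "A *v x \<in> V" if "x \<in> V" for x
  proof -
    have "b \<bullet> (A *v x) = 0" if "b \<in> B" for b
    proof -
      obtain l where "A *v b = l *\<^sub>R b" using eB \<open>b \<in> B\<close> by blast
      hence "b \<bullet> (A *v x) = l * (b \<bullet> x)" using sym_inner[OF sym, of b x] by simp
      thus ?thesis using \<open>x \<in> V\<close> \<open>b \<in> B\<close> by (simp add: V_def)
    qed
    thus ?thesis by (simp add: V_def)
  qed
  have "dim B \<le> card B" using fB by (simp add: dim_le_card span_superset)
  hence "dim B < DIM(real^'n)" using Suc.prems cB by simp
  then obtain x where x0: "x \<noteq> 0" and xo: "\<And>y. y \<in> span B \<Longrightarrow> orthogonal x y"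
    by (rule orthogonal_to_subspace_exists) blast
  have xV: "x \<in> V" unfolding V_def
  proof (intro CollectI ballI)
    fix b assume "b \<in> B"
    hence "orthogonal x b" using xo span_base by blast
    thus "b \<bullet> x = 0" by (simp add: orthogonal_def inner_commute)
  qed
  obtain v where vV: "v \<in> V" and nv: "norm v = 1" and ev: "\<exists>l. A *v v = l *\<^sub>R v"
    using max_eig[OF sym subV invV xV x0] by blast
  have vB: "v \<notin> B"
  proof
    assume "v \<in> B"
    hence "v \<bullet> v = 0" using vV by (simp add: V_def)
    thus False using nv by simp
  qed
  show ?case
  proof (intro exI[of _ "insert v B"] conjI)
    show "finite (insert v B)" using fB by simp
    show "card (insert v B) = Suc k" using fB vB cB by simp
    show "\<forall>b\<in>insert v B. norm b = 1 \<and> (\<exists>l. A *v b = l *\<^sub>R b)" using eB nv ev by auto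
    show "\<forall>a\<in>insert v B. \<forall>b\<in>insert v B. a \<noteq> b \<longrightarrow> a \<bullet> b = 0"
      using oB vV unfolding V_def by (auto simp: inner_commute)
  qed
qed

definition dg :: "('n \<Rightarrow> real) \<Rightarrow> real^'n^'n" where
  "dg d = (\<chi> i j. if i = j then d i else 0)"

lemma dg_mult: "dg a ** dg b = dg (\<lambda>i. a i * b i)"
proof -
  have "(\<Sum>k\<in>UNIV. (if i = k then a i else 0) * (if k = j then b k else 0)) =
        (if i = j then a i * b i else 0)" for i j
  proof -
    have "(\<Sum>k\<in>UNIV. (if i = k then a i else 0) * (if k = j then b k else 0)) =
          (\<Sum>k\<in>UNIV. if k = i then a i * (if i = j then b i else 0) else 0)"
      by (rule sum.cong) auto
    also have "\<dots> = (if i = j then a i * b i else 0)" by simp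
    finally show ?thesis .
  qed
  thus ?thesis by (simp add: dg_def matrix_matrix_mult_def vec_eq_iff)
qed

lemma dg_transpose: "transpose (dg a) = dg a"
  by (simp add: dg_def transpose_def vec_eq_iff)

lemma spectral:
  fixes A :: "real^'n^'n"
  assumes sym: "transpose A = A"
  shows "\<exists>(Q::real^'n^'n) d. transpose Q ** Q = mat 1 \<and> Q ** transpose Q = mat 1 \<and> A = Q ** dg d ** transpose Q"
proof -
  obtain B where fB: "finite B" and cB: "card B = CARD('n)"
    and eB: "\<forall>b\<in>B. norm b = 1 \<and> (\<exists>l. A *v b = l *\<^sub>R b)"
    and oB: "\<forall>a\<in>B. \<forall>b\<in>B. a \<noteq> b \<longrightarrow> a \<bullet> b = 0"
    using eig_set[OF sym, of "CARD('n)"] by auto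
  obtain e where be: "bij_betw e (UNIV::'n set) B"
    using finite_same_card_bij[of "UNIV::'n set" B] fB cB by auto
  have eB': "e k \<in> B" for k using be bij_betwE by blast
  have einj: "e j = e k \<Longrightarrow> j = k" for j k using be by (auto simp: bij_betw_def inj_def)
  have ee: "e j \<bullet> e k = (if j = k then 1 else 0)" for j k
  proof (cases "j = k")
    case True
    then show ?thesis using eB eB'[of k] by (simp add: norm_eq_1)
  next
    case False
    then show ?thesis using oB eB' einj by metis
  qed
  have "\<forall>k. \<exists>l. A *v e k = l *\<^sub>R e k" using eB eB' by blast
  then obtain d where d: "\<And>k. A *v e k = d k *\<^sub>R e k" by metis
  define Q :: "real^'n^'n" where "Q = (\<chi> i k. e k $ i)"
  have "(transpose Q ** Q) $ j $ k = e j \<bullet> e k" for j k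
    by (simp add: matrix_matrix_mult_def transpose_def Q_def inner_vec_def)
  hence QtQ: "transpose Q ** Q = mat 1"
    by (simp add: vec_eq_iff mat_def ee)
  hence QQt: "Q ** transpose Q = mat 1" using matrix_left_right_inverse by blast
  have "(A ** Q) $ i $ k = (A *v e k) $ i" for i k
    by (simp add: matrix_matrix_mult_def matrix_vector_mult_def Q_def)
  hence "(A ** Q) $ i $ k = (Q ** dg d) $ i $ k" for i k
    by (simp add: d Q_def dg_def matrix_matrix_mult_def if_distrib if_distribR sum.delta cong: if_cong)
  hence AQ: "A ** Q = Q ** dg d" by (simp add: vec_eq_iff)
  have "A = A ** (Q ** transpose Q)" by (simp add: QQt)
  also have "\<dots> = Q ** dg d ** transpose Q" by (simp add: matrix_mul_assoc AQ)
  finally have Aeq: "A = Q ** dg d ** transpose Q" .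
  show ?thesis by (intro exI[of _ Q] exI[of _ d] conjI QtQ QQt Aeq)
qed

lemma inner_matT: "(x::real^'m) \<bullet> ((A::real^'n^'m) *v z) = (transpose A *v x) \<bullet> z"
  by (simp add: dot_lmul_matrix)

lemma dg_vec: "(dg p *v y) $ i = p i * y $ i"
proof -
  have "(dg p *v y) $ i = (\<Sum>j\<in>UNIV. (if i = j then p i else 0) * y $ j)"
    by (simp add: dg_def matrix_vector_mult_def)
  also have "\<dots> = (\<Sum>j\<in>UNIV. if j = i then p i * y $ i else 0)" by (rule sum.cong) auto
  also have "\<dots> = p i * y $ i" by simp
  finally show ?thesis .
qed

lemma dg_inner: "y \<bullet> (dg p *v y) = (\<Sum>i\<in>UNIV. p i * (y $ i)^2)"
  by (simp add: inner_vec_def dg_vec power2_eq_square mult.commute mult.left_commute)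

lemma pinv_unique:
  fixes A :: "real^'n^'m"
  assumes 1: "is_pinv A B1" and 2: "is_pinv A B2"
  shows "B1 = B2"
proof -
  have a1: "A ** B1 ** A = A" "B1 ** A ** B1 = B1" "transpose (A ** B1) = A ** B1" "transpose (B1 ** A) = B1 ** A"
    using 1 by (auto simp: is_pinv_def)
  have a2: "A ** B2 ** A = A" "B2 ** A ** B2 = B2" "transpose (A ** B2) = A ** B2" "transpose (B2 ** A) = B2 ** A"
    using 2 by (auto simp: is_pinv_def)
  have "B1 = B1 ** (A ** B1)" using a1(2) by (simp add: matrix_mul_assoc)
  also have "\<dots> = B1 ** transpose (A ** B1)" using a1(3) by simp
  also have "\<dots> = B1 ** transpose (A ** B2 ** A ** B1)" using a2(1) by simp
  also have "\<dots> = B1 ** (transpose (A ** B1) ** transpose (A ** B2))"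
    by (simp add: matrix_transpose_mul matrix_mul_assoc)
  also have "\<dots> = B1 ** A ** B1 ** A ** B2" using a1(3) a2(3) by (simp add: matrix_mul_assoc)
  also have "\<dots> = B1 ** A ** B2" using a1(2) by simp
  finally have e1: "B1 = B1 ** A ** B2" .
  have "B2 = (B2 ** A) ** B2" using a2(2) by simp
  also have "\<dots> = transpose (B2 ** A) ** B2" using a2(4) by simp
  also have "\<dots> = transpose (B2 ** (A ** B1 ** A)) ** B2" using a1(1) by simp
  also have "\<dots> = (transpose (B1 ** A) ** transpose (B2 ** A)) ** B2"
    by (simp add: matrix_transpose_mul matrix_mul_assoc)
  also have "\<dots> = B1 ** A ** B2 ** A ** B2" using a1(4) a2(4) by (simp add: matrix_mul_assoc)
  also have "\<dots> = B1 ** A ** B2" using a2(2) by (metis matrix_mul_assoc)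
  finally have e2: "B2 = B1 ** A ** B2" .
  show ?thesis using e1 e2 by simp
qed

lemma pinv_eq: "is_pinv A B \<Longrightarrow> pinv A = B"
  unfolding pinv_def using pinv_unique by blast

locale orth =
  fixes Q :: "real^'n^'n"
  assumes QtQ: "transpose Q ** Q = mat 1" and QQt: "Q ** transpose Q = mat 1"
begin

definition conj :: "('n \<Rightarrow> real) \<Rightarrow> real^'n^'n" where
  "conj a = Q ** dg a ** transpose Q"

lemma conj_mult: "conj a ** conj b = conj (\<lambda>i. a i * b i)"
proof -
  have "conj a ** conj b = Q ** dg a ** (transpose Q ** Q) ** dg b ** transpose Q"
    by (simp add: conj_def matrix_mul_assoc)
  also have "\<dots> = Q ** (dg a ** dg b) ** transpose Q" by (simp add: QtQ matrix_mul_assoc)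
  also have "\<dots> = conj (\<lambda>i. a i * b i)" by (simp add: conj_def dg_mult)
  finally show ?thesis .
qed

lemma conj_transpose: "transpose (conj a) = conj a"
  by (simp add: conj_def matrix_transpose_mul dg_transpose matrix_mul_assoc)

lemma conj_psd: "(\<And>i. p i \<ge> 0) \<Longrightarrow> psd (conj p)"
proof -
  assume p: "\<And>i. p i \<ge> 0"
  have "0 \<le> x \<bullet> (conj p *v x)" for x
  proof -
    have "x \<bullet> (conj p *v x) = (transpose Q *v x) \<bullet> (dg p *v (transpose Q *v x))"
      by (simp add: conj_def matrix_vector_mul_assoc[symmetric] inner_matT)
    also have "\<dots> \<ge> 0" by (simp add: dg_inner p sum_nonneg)
    finally show ?thesis .
  qed
  thus ?thesis by (simp add: psd_def conj_transpose)
qed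

lemma diag_sqrt_unique:
  fixes R :: "real^'n^'n"
  assumes R: "psd R" and RR: "R ** R = dg p" and p: "\<And>i. p i \<ge> 0"
  shows "R = dg (\<lambda>i. sqrt (p i))"
proof -
  have sym: "transpose R = R" using R by (simp add: psd_def)
  have pos: "0 \<le> x \<bullet> (R *v x)" for x using R by (simp add: psd_def)
  have col: "R *v axis k 1 = sqrt (p k) *\<^sub>R axis k 1" for k
  proof -
    define e where "e = (axis k 1 :: real^'n)"
    have RRe: "R *v (R *v e) = p k *\<^sub>R e"
      by (simp add: matrix_vector_mul_assoc RR e_def vec_eq_iff dg_vec axis_def)
    show ?thesis
    proof (cases "p k = 0")
      case True
      have "(R *v e) \<bullet> (R *v e) = e \<bullet> (R *v (R *v e))"
        using sym_inner[OF sym, of e "R *v e"] by simp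
      also have "\<dots> = 0" using RRe True by simp
      finally have "R *v e = 0" by simp
      thus ?thesis using True by (simp add: e_def)
    next
      case False
      define s where "s = sqrt (p k)"
      have s0: "s > 0" using False p[of k] by (simp add: s_def)
      have ss: "s * s = p k" using p[of k] by (simp add: s_def)
      define y where "y = R *v e - s *\<^sub>R e"
      have "R *v y + s *\<^sub>R y = R *v (R *v e) - (s * s) *\<^sub>R e"
        by (simp add: y_def algebra_simps matrix_vector_mult_scaleR)
      hence Ry: "R *v y + s *\<^sub>R y = 0" using RRe ss by simp
      have "0 = y \<bullet> (R *v y + s *\<^sub>R y)" using Ry by simp
      also have "\<dots> = y \<bullet> (R *v y) + s * (y \<bullet> y)" by (simp add: inner_add_right)
      finally have "s * (y \<bullet> y) \<le> 0" using pos[of y] by linarith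
      hence "y \<bullet> y \<le> 0" using s0 by (simp add: mult_le_0_iff)
      hence "y = 0" by (metis inner_eq_zero_iff inner_ge_zero order_antisym)
      thus ?thesis by (simp add: y_def s_def e_def)
    qed
  qed
  have "R $ i $ k = dg (\<lambda>i. sqrt (p i)) $ i $ k" for i k
  proof -
    have "R $ i $ k = (R *v axis k 1) $ i"
      by (simp add: matrix_vector_mult_def axis_def if_distrib sum.delta cong: if_cong)
    also have "\<dots> = (sqrt (p k) *\<^sub>R axis k 1) $ i" by (simp only: col)
    also have "\<dots> = dg (\<lambda>i. sqrt (p i)) $ i $ k" by (simp add: dg_def axis_def)
    finally show ?thesis .
  qed
  thus ?thesis by (simp add: vec_eq_iff)
qed

lemma conj_sqrt_unique:
  assumes R: "psd R" and RR: "R ** R = conj p" and p: "\<And>i. p i \<ge> 0"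
  shows "R = conj (\<lambda>i. sqrt (p i))"
proof -
  define R' where "R' = transpose Q ** R ** Q"
  have symR: "transpose R = R" using R by (simp add: psd_def)
  have "psd R'"
  proof -
    have "0 \<le> x \<bullet> (R' *v x)" for x
    proof -
      have "R' *v x = transpose Q *v (R *v (Q *v x))"
        unfolding R'_def by (simp only: matrix_vector_mul_assoc matrix_mul_assoc)
      hence "x \<bullet> (R' *v x) = (transpose (transpose Q) *v x) \<bullet> (R *v (Q *v x))"
        by (simp only: inner_matT)
      hence "x \<bullet> (R' *v x) = (Q *v x) \<bullet> (R *v (Q *v x))" by (simp only: transpose_transpose)
      also have "\<dots> \<ge> 0" using R by (simp add: psd_def)
      finally show ?thesis .
    qed
    moreover have "transpose R' = R'"
      by (simp add: R'_def matrix_transpose_mul symR matrix_mul_assoc)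
    ultimately show ?thesis by (simp add: psd_def)
  qed
  moreover have "R' ** R' = dg p"
  proof -
    have "R' ** R' = transpose Q ** R ** (Q ** transpose Q) ** R ** Q"
      by (simp add: R'_def matrix_mul_assoc)
    also have "\<dots> = transpose Q ** (R ** R) ** Q" by (simp add: QQt matrix_mul_assoc)
    also have "\<dots> = (transpose Q ** Q) ** dg p ** (transpose Q ** Q)"
      by (simp add: RR conj_def matrix_mul_assoc)
    also have "\<dots> = dg p" by (simp add: QtQ)
    finally show ?thesis .
  qed
  ultimately have "R' = dg (\<lambda>i. sqrt (p i))" using diag_sqrt_unique p by blast
  hence "Q ** R' ** transpose Q = conj (\<lambda>i. sqrt (p i))" by (simp add: conj_def)
  moreover have "Q ** R' ** transpose Q = R"
  proof -
    have "Q ** R' ** transpose Q = (Q ** transpose Q) ** R ** (Q ** transpose Q)"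
      by (simp add: R'_def matrix_mul_assoc)
    thus ?thesis by (simp add: QQt)
  qed
  ultimately show ?thesis by simp
qed

lemma psd_sqrt_conj:
  assumes p: "\<And>i. p i \<ge> 0"
  shows "psd_sqrt (conj p) = conj (\<lambda>i. sqrt (p i))"
proof -
  have ex: "psd (conj (\<lambda>i. sqrt (p i))) \<and> conj (\<lambda>i. sqrt (p i)) ** conj (\<lambda>i. sqrt (p i)) = conj p"
    using p by (simp add: conj_psd conj_mult)
  show ?thesis unfolding psd_sqrt_def
  proof (rule the_equality)
    show "psd (conj (\<lambda>i. sqrt (p i))) \<and> conj (\<lambda>i. sqrt (p i)) ** conj (\<lambda>i. sqrt (p i)) = conj p"
      by (rule ex)
    show "R = conj (\<lambda>i. sqrt (p i))" if "psd R \<and> R ** R = conj p" for R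
      using that conj_sqrt_unique p by blast
  qed
qed

lemma pinv_conj: "pinv (conj d) = conj (\<lambda>i. inverse (d i))"
proof (rule pinv_eq)
  have 1: "d i * inverse (d i) * d i = d i" for i by (cases "d i = 0") auto
  have 2: "inverse (d i) * d i * inverse (d i) = inverse (d i)" for i by (cases "d i = 0") auto
  have 3: "d i * (d i * inverse (d i)) = d i" for i by (cases "d i = 0") auto
  have 4: "inverse (d i) * (d i * inverse (d i)) = inverse (d i)" for i by (cases "d i = 0") auto
  show "is_pinv (conj d) (conj (\<lambda>i. inverse (d i)))"
    unfolding is_pinv_def
    by (simp add: conj_mult conj_transpose 1 2 3 4)
qed

end

lemma dg_left: "(dg a ** P) $ i $ j = a i * P $ i $ j"
proof -
  have "(dg a ** P) $ i $ j = (\<Sum>k\<in>UNIV. (if i = k then a i else 0) * P $ k $ j)"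
    by (simp add: dg_def matrix_matrix_mult_def)
  also have "\<dots> = (\<Sum>k\<in>UNIV. if k = i then a i * P $ i $ j else 0)" by (rule sum.cong) auto
  also have "\<dots> = a i * P $ i $ j" by simp
  finally show ?thesis .
qed

lemma dg_right: "(P ** dg a) $ i $ j = P $ i $ j * a j"
proof -
  have "(P ** dg a) $ i $ j = (\<Sum>k\<in>UNIV. P $ i $ k * (if k = j then a k else 0))"
    by (simp add: dg_def matrix_matrix_mult_def)
  also have "\<dots> = (\<Sum>k\<in>UNIV. if k = j then P $ i $ j * a j else 0)" by (rule sum.cong) auto
  also have "\<dots> = P $ i $ j * a j" by simp
  finally show ?thesis .
qed

lemma conj_entry: "(Q ** dg w ** transpose Q) $ i $ j = (\<Sum>k\<in>UNIV. Q $ i $ k * w k * Q $ j $ k)"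
  by (simp add: matrix_matrix_mult_def[of "Q ** dg w"] dg_right transpose_def)

theorem mainTheorem2:
  fixes S :: "real^'n^'n" and G :: "real^'n^'m"
  assumes diag: "\<And>i j. i \<noteq> j \<Longrightarrow> S $ i $ j = 0"
    and pos: "\<And>i. S $ i $ i > 0"
    and nz: "G \<noteq> 0"
  shows "frob_inner G (PolarFactor (G ** S)) > 0"
proof -
  define X where "X = G ** S"
  define M where "M = transpose X ** X"
  have symM: "transpose M = M" by (simp add: M_def matrix_transpose_mul)
  obtain Q :: "real^'n^'n" and d where QtQ: "transpose Q ** Q = mat 1" and QQt: "Q ** transpose Q = mat 1"
    and Meq: "M = Q ** dg d ** transpose Q" using spectral[OF symM] by blast
  interpret orth Q using QtQ QQt by unfold_locales
  have Mc: "M = conj d" by (simp add: conj_def Meq)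
  have XX: "x \<bullet> (M *v x) = (X *v x) \<bullet> (X *v x)" for x
  proof -
    have "M *v x = transpose X *v (X *v x)" unfolding M_def by (simp only: matrix_vector_mul_assoc)
    hence "x \<bullet> (M *v x) = (transpose (transpose X) *v x) \<bullet> (X *v x)" by (simp only: inner_matT)
    thus ?thesis by (simp only: transpose_transpose)
  qed
  have dgM: "dg d = transpose Q ** M ** Q"
  proof -
    have "transpose Q ** M ** Q = (transpose Q ** Q) ** dg d ** (transpose Q ** Q)"
      by (simp add: Meq matrix_mul_assoc)
    thus ?thesis by (simp add: QtQ)
  qed
  have d0: "d k \<ge> 0" for k
  proof -
    define e where "e = (axis k 1 :: real^'n)"
    have "dg d *v e = d k *\<^sub>R e" by (simp add: vec_eq_iff dg_vec e_def axis_def)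
    hence "e \<bullet> (dg d *v e) = d k" by (simp add: e_def inner_axis_axis)
    moreover have "dg d *v e = transpose Q *v (M *v (Q *v e))"
      unfolding dgM by (simp only: matrix_vector_mul_assoc matrix_mul_assoc)
    hence "e \<bullet> (dg d *v e) = (transpose (transpose Q) *v e) \<bullet> (M *v (Q *v e))" by (simp only: inner_matT)
    hence "e \<bullet> (dg d *v e) = (Q *v e) \<bullet> (M *v (Q *v e))" by (simp only: transpose_transpose)
    moreover have "(Q *v e) \<bullet> (M *v (Q *v e)) \<ge> 0" using XX by simp
    ultimately show ?thesis by simp
  qed
  define p where "p i = inverse (d i)" for i
  have p0: "p i \<ge> 0" for i using d0[of i] by (simp add: p_def)
  define R where "R = conj (\<lambda>i. sqrt (p i))"
  have "pinv M = conj p" unfolding Mc pinv_conj p_def ..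
  hence "psd_sqrt (pinv M) = R" using psd_sqrt_conj[OF p0] by (simp add: R_def)
  hence PF: "PolarFactor X = X ** R" by (simp add: PolarFactor_def M_def)
  define s where "s i = S $ i $ i" for i
  have Sdg: "S = dg s" using diag by (auto simp: vec_eq_iff dg_def s_def)
  define Si where "Si = dg (\<lambda>i. inverse (s i))"
  have one: "dg (\<lambda>i. 1) = (mat 1 :: real^'n^'n)" by (simp add: dg_def mat_def vec_eq_iff)
  have sne: "s i \<noteq> 0" for i using pos[of i] by (simp add: s_def)
  have SSi: "S ** Si = mat 1" "Si ** S = mat 1"
    by (simp_all add: Sdg Si_def dg_mult sne one[symmetric])
  have StS: "transpose S = S" by (simp add: Sdg dg_transpose)
  have Mexp: "M = S ** (transpose G ** G) ** S"
    by (simp add: M_def X_def matrix_transpose_mul StS matrix_mul_assoc)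
  have GtG: "transpose G ** G = Si ** M ** Si"
  proof -
    have "Si ** M ** Si = (Si ** S) ** (transpose G ** G) ** (S ** Si)"
      by (simp add: Mexp matrix_mul_assoc)
    thus ?thesis by (simp add: SSi)
  qed
  define w where "w i = d i * sqrt (p i)" for i
  have w0: "w k \<ge> 0" for k using d0[of k] p0[of k] by (simp add: w_def)
  have MR: "M ** R = conj w" by (simp add: Mc R_def conj_mult w_def[abs_def])
  have PF2: "PolarFactor (G ** S) = G ** S ** R" using PF by (simp only: X_def)
  have e1: "transpose G ** G ** S ** R = Si ** M ** (Si ** S) ** R"
    by (simp only: GtG matrix_mul_assoc)
  also have "\<dots> = Si ** (M ** R)" by (simp add: SSi matrix_mul_assoc)
  finally have e2: "transpose G ** G ** S ** R = Si ** (M ** R)" .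
  have "frob_inner G (PolarFactor (G ** S)) = trace (transpose G ** G ** S ** R)"
    unfolding frob_inner_def PF2 by (simp only: matrix_mul_assoc)
  also have "\<dots> = trace (Si ** (M ** R))" by (simp only: e2)
  also have "\<dots> = (\<Sum>i\<in>UNIV. inverse (s i) * (\<Sum>k\<in>UNIV. Q $ i $ k * w k * Q $ i $ k))"
    by (simp add: trace_def MR Si_def dg_left conj_def conj_entry)
  finally have tr: "frob_inner G (PolarFactor (G ** S)) =
      (\<Sum>i\<in>UNIV. inverse (s i) * (\<Sum>k\<in>UNIV. Q $ i $ k * w k * Q $ i $ k))" .
  obtain k0 where dk0: "d k0 > 0"
  proof (rule ccontr)
    assume "\<not> thesis"
    hence "\<forall>k. d k \<le> 0" using that by (meson not_le)
    hence "\<forall>k. d k = 0" using d0 by (meson order_antisym)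
    hence "dg d = 0" by (simp add: dg_def vec_eq_iff)
    hence "M = 0" by (simp add: Meq)
    hence "X *v x = 0" for x using XX[of x] by simp
    hence "X = 0" by (simp add: matrix_eq)
    moreover have "G = X ** Si" by (simp add: X_def matrix_mul_assoc[symmetric] SSi)
    ultimately show False using nz by simp
  qed
  have wk0: "w k0 > 0" using dk0 by (simp add: w_def p_def)
  obtain i0 where qi0: "Q $ i0 $ k0 \<noteq> 0"
  proof (rule ccontr)
    assume "\<not> thesis"
    hence "\<forall>i. Q $ i $ k0 = 0" using that by blast
    hence "(transpose Q ** Q) $ k0 $ k0 = 0" by (simp add: matrix_matrix_mult_def transpose_def)
    thus False using QtQ by (simp add: mat_def)
  qed
  have tnn: "0 \<le> Q $ i $ k * w k * Q $ i $ k" for i k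
    using w0[of k] by (simp add: mult.commute mult.left_commute)
  have inner_pos: "0 < (\<Sum>k\<in>UNIV. Q $ i0 $ k * w k * Q $ i0 $ k)"
  proof (rule sum_pos2[of UNIV k0])
    show "0 < Q $ i0 $ k0 * w k0 * Q $ i0 $ k0"
      using wk0 qi0 by (auto simp add: mult.commute mult.left_commute zero_less_mult_iff linorder_neq_iff)
  qed (auto simp: tnn)
  have spos: "inverse (s i) > 0" for i using pos[of i] by (simp add: s_def)
  have "0 < (\<Sum>i\<in>UNIV. inverse (s i) * (\<Sum>k\<in>UNIV. Q $ i $ k * w k * Q $ i $ k))"
  proof (rule sum_pos2[of UNIV i0])
    show "0 < inverse (s i0) * (\<Sum>k\<in>UNIV. Q $ i0 $ k * w k * Q $ i0 $ k)"
      using spos inner_pos by simp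
    show "\<And>i. i \<in> UNIV \<Longrightarrow> 0 \<le> inverse (s i) * (\<Sum>k\<in>UNIV. Q $ i $ k * w k * Q $ i $ k)"
      using spos tnn by (simp add: sum_nonneg less_imp_le)
  qed auto
  thus ?thesis using tr by simp
qed

end
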